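(* Let $G$ be a graph that has a proper VPG-representation $R_V$ in a $w\times h$-grid. Then every subgraph $G'$ of $G$ has an EPG-representation $R_E$ in a $2w\times 2h$-grid. Furthermore, if every vertex-path of $R_V$ is $x$-monotone, then $R_E$ can be chosen so that every vertex-path of $R_E$ is $x$-monotone.
   Context: The $w\times h$-grid consists of all grid-points $(i,j)$ with integer coordinates $1\le i\le w$, $1\le j\le h$, and all grid-edges joining grid-points at distance $1$. A vertex-path is a path in the grid. An EPG-representation of a graph $G$ assigns to each vertex $v$ a vertex-path $\mathrm{path}(v)$ such that $(v,w)$ is an edge of $G$ if and only if $\mathrm{path}(v)$ and $\mathrm{path}(w)$ share a grid-edge. A VPG-representation of $G$ assigns to each vertex a vertex-path such that $(v,w)$ is an edge if and only if $\mathrm{path}(v)$ and $\mathrm{path}(w)$ share a grid-point. A VPG-representation is proper if (a) every grid-edge is used by at most one vertex-path, and (b) whenever a grid-point $p$ belongs to both $\mathrm{path}(v)$ and $\mathrm{path}(w)$ ($v\neq w$), one of these two vertex-paths contains the grid-edge going rightward from $p$ and the other contains the grid-edge going upward from $p$. A vertex-path is $x$-monotone if every vertical line meeting it meets it in a single interval. *)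

theory Defs
  imports "HOL-Analysis.Analysis"
begin

type_synonym gpoint = "nat \<times> nat"

definition grid_point :: "nat \<Rightarrow> nat \<Rightarrow> gpoint \<Rightarrow> bool" where
  "grid_point w h p \<longleftrightarrow> 1 \<le> fst p \<and> fst p \<le> w \<and> 1 \<le> snd p \<and> snd p \<le> h"

definition grid_adj :: "gpoint \<Rightarrow> gpoint \<Rightarrow> bool" where
  "grid_adj p q \<longleftrightarrow>
     (fst p = fst q \<and> (snd p = snd q + 1 \<or> snd q = snd p + 1)) \<or>
     (snd p = snd q \<and> (fst p = fst q + 1 \<or> fst q = fst p + 1))"

definition vertex_path :: "nat \<Rightarrow> nat \<Rightarrow> gpoint list \<Rightarrow> bool" where
  "vertex_path w h ps \<longleftrightarrow> ps \<noteq> [] \<and> distinct ps \<and> (\<forall>p\<in>set ps. grid_point w h p) \<and>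
     (\<forall>i. Suc i < length ps \<longrightarrow> grid_adj (ps ! i) (ps ! Suc i))"

definition path_edges :: "gpoint list \<Rightarrow> gpoint set set" where
  "path_edges ps = {{ps ! i, ps ! Suc i} | i. Suc i < length ps}"

definition right_edge :: "gpoint \<Rightarrow> gpoint set" where
  "right_edge p = {p, (fst p + 1, snd p)}"

definition up_edge :: "gpoint \<Rightarrow> gpoint set" where
  "up_edge p = {p, (fst p, snd p + 1)}"

definition simple_graph :: "'v set \<Rightarrow> ('v \<Rightarrow> 'v \<Rightarrow> bool) \<Rightarrow> bool" where
  "simple_graph V E \<longleftrightarrow> (\<forall>u v. E u v \<longrightarrow> u \<in> V \<and> v \<in> V \<and> u \<noteq> v \<and> E v u)"

definition subgraph :: "'v set \<Rightarrow> ('v \<Rightarrow> 'v \<Rightarrow> bool) \<Rightarrow> 'v set \<Rightarrow> ('v \<Rightarrow> 'v \<Rightarrow> bool) \<Rightarrow> bool" where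
  "subgraph V' E' V E \<longleftrightarrow> simple_graph V' E' \<and> V' \<subseteq> V \<and> (\<forall>u v. E' u v \<longrightarrow> E u v)"

definition VPG_rep :: "nat \<Rightarrow> nat \<Rightarrow> 'v set \<Rightarrow> ('v \<Rightarrow> 'v \<Rightarrow> bool) \<Rightarrow> ('v \<Rightarrow> gpoint list) \<Rightarrow> bool" where
  "VPG_rep w h V E R \<longleftrightarrow> (\<forall>v\<in>V. vertex_path w h (R v)) \<and>
     (\<forall>u\<in>V. \<forall>v\<in>V. u \<noteq> v \<longrightarrow> (E u v \<longleftrightarrow> set (R u) \<inter> set (R v) \<noteq> {}))"

definition EPG_rep :: "nat \<Rightarrow> nat \<Rightarrow> 'v set \<Rightarrow> ('v \<Rightarrow> 'v \<Rightarrow> bool) \<Rightarrow> ('v \<Rightarrow> gpoint list) \<Rightarrow> bool" where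
  "EPG_rep w h V E R \<longleftrightarrow> (\<forall>v\<in>V. vertex_path w h (R v)) \<and>
     (\<forall>u\<in>V. \<forall>v\<in>V. u \<noteq> v \<longrightarrow> (E u v \<longleftrightarrow> path_edges (R u) \<inter> path_edges (R v) \<noteq> {}))"

definition proper_VPG_rep :: "nat \<Rightarrow> nat \<Rightarrow> 'v set \<Rightarrow> ('v \<Rightarrow> 'v \<Rightarrow> bool) \<Rightarrow> ('v \<Rightarrow> gpoint list) \<Rightarrow> bool" where
  "proper_VPG_rep w h V E R \<longleftrightarrow> VPG_rep w h V E R \<and>
     (\<forall>u\<in>V. \<forall>v\<in>V. u \<noteq> v \<longrightarrow> path_edges (R u) \<inter> path_edges (R v) = {}) \<and>
     (\<forall>u\<in>V. \<forall>v\<in>V. \<forall>p. u \<noteq> v \<longrightarrow> p \<in> set (R u) \<longrightarrow> p \<in> set (R v) \<longrightarrow>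
        (right_edge p \<in> path_edges (R u) \<and> up_edge p \<in> path_edges (R v)) \<or>
        (right_edge p \<in> path_edges (R v) \<and> up_edge p \<in> path_edges (R u)))"

definition gpt :: "gpoint \<Rightarrow> real \<times> real" where
  "gpt p = (real (fst p), real (snd p))"

definition path_curve :: "gpoint list \<Rightarrow> (real \<times> real) set" where
  "path_curve ps = gpt ` set ps \<union>
     (\<Union>i\<in>{i. Suc i < length ps}. closed_segment (gpt (ps ! i)) (gpt (ps ! Suc i)))"

definition x_monotone :: "gpoint list \<Rightarrow> bool" where
  "x_monotone ps \<longleftrightarrow> (\<forall>c::real. is_interval {y::real. (c, y) \<in> path_curve ps})"

end

theory Submission
  imports Defs
begin


definition steps :: "'a list \<Rightarrow> ('a \<times> 'a) set" where
  "steps ps = set (zip ps (tl ps))"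

lemma steps_simps[simp]: "steps [] = {}" "steps [a] = {}"
  "steps (a # b # r) = insert (a, b) (steps (b # r))"
  by (auto simp: steps_def)

lemma steps_nth: "(a, b) \<in> steps ps \<longleftrightarrow> (\<exists>i. Suc i < length ps \<and> a = ps ! i \<and> b = ps ! Suc i)"
proof
  assume "(a, b) \<in> steps ps"
  then obtain n where "a = ps ! n" "b = ps ! Suc n" "n < length ps - 1"
    by (auto simp: steps_def in_set_zip nth_tl)
  then show "\<exists>i. Suc i < length ps \<and> a = ps ! i \<and> b = ps ! Suc i"
    by (intro exI[of _ n]) auto
next
  assume "\<exists>i. Suc i < length ps \<and> a = ps ! i \<and> b = ps ! Suc i"
  then obtain i where "Suc i < length ps" "a = ps ! i" "b = ps ! Suc i" by blast
  then show "(a, b) \<in> steps ps"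
    unfolding steps_def in_set_zip by (intro exI[of _ i]) (auto simp: nth_tl)
qed

lemma steps_set: "(a, b) \<in> steps ps \<Longrightarrow> a \<in> set ps \<and> b \<in> set ps"
  by (auto simp: steps_nth)

lemma steps_image: "steps ps = (\<lambda>i. (ps!i, ps!Suc i)) ` {i. Suc i < length ps}"
proof
  show "steps ps \<subseteq> (\<lambda>i. (ps!i, ps!Suc i)) ` {i. Suc i < length ps}"
  proof
    fix x assume "x \<in> steps ps"
    moreover obtain a b where "x = (a, b)" by fastforce
    ultimately obtain i where "Suc i < length ps" "a = ps ! i" "b = ps ! Suc i"
      using steps_nth by metis
    then show "x \<in> (\<lambda>i. (ps!i, ps!Suc i)) ` {i. Suc i < length ps}"
      using \<open>x = (a, b)\<close> by blast
  qed
  show "(\<lambda>i. (ps!i, ps!Suc i)) ` {i. Suc i < length ps} \<subseteq> steps ps"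
  proof
    fix x assume "x \<in> (\<lambda>i. (ps!i, ps!Suc i)) ` {i. Suc i < length ps}"
    then obtain i where "Suc i < length ps" "x = (ps!i, ps!Suc i)" by blast
    then show "x \<in> steps ps" using steps_nth by metis
  qed
qed

lemma path_curve_steps: "path_curve ps = gpt ` set ps \<union> (\<Union>(a,b)\<in>steps ps. closed_segment (gpt a) (gpt b))"
  by (simp add: path_curve_def steps_image)

lemma path_edges_steps: "path_edges ps = (\<lambda>(a,b). {a,b}) ` steps ps"
  by (simp add: path_edges_def steps_image image_image) blast

lemma path_curve_simps: "path_curve [] = {}" "path_curve [q] = {gpt q}"
  "path_curve (q # q' # r) = closed_segment (gpt q) (gpt q') \<union> path_curve (q' # r)"
  using ends_in_segment[of "gpt q" "gpt q'"] by (simp_all add: path_curve_steps) blast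

lemma path_edges_simps: "path_edges [] = {}" "path_edges [q] = {}"
  "path_edges (q # q' # r) = insert {q, q'} (path_edges (q' # r))"
  by (simp_all add: path_edges_steps)

definition slice :: "real \<Rightarrow> (real \<times> real) set \<Rightarrow> real set" where
  "slice c S = {y. (c, y) \<in> S}"

lemma convex_slice: "convex S \<Longrightarrow> convex (slice c S)"
  unfolding convex_def slice_def
proof (clarify)
  fix x y u v :: real
  assume S: "\<forall>x\<in>S. \<forall>y\<in>S. \<forall>u\<ge>0. \<forall>v\<ge>0. u + v = 1 \<longrightarrow> u *\<^sub>R x + v *\<^sub>R y \<in> S"
    and "(c, x) \<in> S" "(c, y) \<in> S" "0 \<le> u" "0 \<le> v" "u + v = 1"
  then have "u *\<^sub>R (c, x) + v *\<^sub>R (c, y) \<in> S" by blast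
  moreover have "u *\<^sub>R (c, x) + v *\<^sub>R (c, y) = (c, u *\<^sub>R x + v *\<^sub>R y)"
  proof -
    have "c * u + c * v = c" by (metis \<open>u + v = 1\<close> distrib_left mult.right_neutral)
    then show ?thesis by (simp add: algebra_simps)
  qed
  ultimately show "(c, u *\<^sub>R x + v *\<^sub>R y) \<in> S" by simp
qed

lemma interval_seg: "is_interval (slice c (closed_segment A B))"
  by (simp add: is_interval_convex_1 convex_slice)

lemma seg_fst: fixes A B :: "real \<times> real" shows "p \<in> closed_segment A B \<Longrightarrow> \<exists>u. 0 \<le> u \<and> u \<le> 1 \<and>
   fst p = (1 - u) * fst A + u * fst B \<and> snd p = (1 - u) * snd A + u * snd B"
proof -
  assume "p \<in> closed_segment A B"
  then obtain u where "p = (1-u) *\<^sub>R A + u *\<^sub>R B" "0 \<le> u" "u \<le> 1" by (auto simp: closed_segment_def)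
  moreover have "fst p = (1-u) * fst A + u * fst B \<and> snd p = (1-u) * snd A + u * snd B"
    using \<open>p = (1-u) *\<^sub>R A + u *\<^sub>R B\<close> by simp
  ultimately show ?thesis by blast
qed

lemma seg_fst_ge: fixes A B p :: "real \<times> real" shows "p \<in> closed_segment A B \<Longrightarrow> fst A \<ge> m \<Longrightarrow> fst B \<ge> m \<Longrightarrow> fst p \<ge> (m::real)"
proof -
  assume "p \<in> closed_segment A B" "fst A \<ge> m" "fst B \<ge> m"
  then obtain u where u: "0 \<le> u" "u \<le> 1" "fst p = (1 - u) * fst A + u * fst B" using seg_fst by blast
  have "(1-u) * fst A \<ge> (1-u) * m" using u \<open>fst A \<ge> m\<close> by (intro mult_left_mono) auto
  moreover have "u * fst B \<ge> u * m" using u \<open>fst B \<ge> m\<close> by (intro mult_left_mono) auto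
  moreover have "(1-u) * m + u * m = m" by (simp add: algebra_simps)
  ultimately show ?thesis using u by linarith
qed

lemma seg_fst_le: fixes A B p :: "real \<times> real" shows "p \<in> closed_segment A B \<Longrightarrow> fst A \<le> m \<Longrightarrow> fst B \<le> m \<Longrightarrow> fst p \<le> (m::real)"
proof -
  assume "p \<in> closed_segment A B" "fst A \<le> m" "fst B \<le> m"
  then obtain u where u: "0 \<le> u" "u \<le> 1" "fst p = (1 - u) * fst A + u * fst B" using seg_fst by blast
  have "(1-u) * fst A \<le> (1-u) * m" using u \<open>fst A \<le> m\<close> by (intro mult_left_mono) auto
  moreover have "u * fst B \<le> u * m" using u \<open>fst B \<le> m\<close> by (intro mult_left_mono) auto
  moreover have "(1-u) * m + u * m = m" by (simp add: algebra_simps)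
  ultimately show ?thesis using u by linarith
qed

lemma interval_Un: "is_interval (A::real set) \<Longrightarrow> is_interval B \<Longrightarrow> A \<inter> B \<noteq> {} \<Longrightarrow> is_interval (A \<union> B)"
  by (simp add: is_interval_connected_1 connected_Un)


lemma fst_gpt[simp]: "fst (gpt q) = real (fst q)" and snd_gpt[simp]: "snd (gpt q) = real (snd q)"
  by (simp_all add: gpt_def)

lemma slice_Un: "slice c (S \<union> T) = slice c S \<union> slice c T"
  by (auto simp: slice_def)

lemma curve_fst_ge: "sorted (map fst ps) \<Longrightarrow> ps \<noteq> [] \<Longrightarrow> p \<in> path_curve ps \<Longrightarrow> fst p \<ge> real (fst (hd ps))"
proof (induction ps arbitrary: p rule: induct_list012)
  case (3 q q' r)
  show ?case
  proof (cases "p \<in> closed_segment (gpt q) (gpt q')")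
    case True
    then show ?thesis using "3.prems"(1) by (intro seg_fst_ge[OF True]) auto
  next
    case False
    then have "p \<in> path_curve (q' # r)" using "3.prems"(3) by (simp add: path_curve_simps)
    then have "fst p \<ge> real (fst q')" using "3.IH"(2) "3.prems"(1) by fastforce
    then show ?thesis using "3.prems"(1) by simp
  qed
qed (auto simp: path_curve_simps)

lemma curve_fst_le: "sorted_wrt (\<ge>) (map fst ps) \<Longrightarrow> ps \<noteq> [] \<Longrightarrow> p \<in> path_curve ps \<Longrightarrow> fst p \<le> real (fst (hd ps))"
proof (induction ps arbitrary: p rule: induct_list012)
  case (3 q q' r)
  show ?case
  proof (cases "p \<in> closed_segment (gpt q) (gpt q')")
    case True
    then show ?thesis using "3.prems"(1) by (intro seg_fst_le[OF True]) auto
  next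
    case False
    then have "p \<in> path_curve (q' # r)" using "3.prems"(3) by (simp add: path_curve_simps)
    then have "fst p \<le> real (fst q')" using "3.IH"(2) "3.prems"(1) by fastforce
    then show ?thesis using "3.prems"(1) by simp
  qed
qed (auto simp: path_curve_simps)

lemma slice_single: "is_interval (slice c {x})"
  using interval_seg[of c x x] by simp

lemma xm_sorted: "sorted (map fst ps) \<Longrightarrow> is_interval (slice c (path_curve ps))"
proof (induction ps rule: induct_list012)
  case 1 then show ?case by (simp add: path_curve_simps slice_def)
next
  case (2 q) then show ?case by (simp add: path_curve_simps slice_single)
next
  case (3 q q' r)
  have IH: "is_interval (slice c (path_curve (q' # r)))" using 3 by simp
  let ?S = "slice c (closed_segment (gpt q) (gpt q'))"
  let ?T = "slice c (path_curve (q' # r))"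
  have eq: "slice c (path_curve (q # q' # r)) = ?S \<union> ?T" by (simp add: path_curve_simps slice_Un)
  show ?case
  proof (cases "c = real (fst q')")
    case True
    have "gpt q' \<in> closed_segment (gpt q) (gpt q')" by simp
    moreover have "gpt q' \<in> path_curve (q' # r)" by (simp add: path_curve_steps)
    ultimately have "snd (gpt q') \<in> ?S \<inter> ?T" using True by (auto simp: slice_def gpt_def)
    then show ?thesis unfolding eq using IH interval_seg by (intro interval_Un) auto
  next
    case False
    show ?thesis
    proof (cases "?T = {}")
      case True then show ?thesis unfolding eq using interval_seg by simp
    next
      case F2: False
      then obtain y where "(c, y) \<in> path_curve (q' # r)" by (auto simp: slice_def)
      then have "c \<ge> real (fst q')" using curve_fst_ge[of "q' # r" "(c, y)"] 3(3) by simp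
      then have "c > real (fst q')" using False by simp
      have "?S = {}"
      proof (rule ccontr)
        assume "?S \<noteq> {}"
        then obtain y' where "(c, y') \<in> closed_segment (gpt q) (gpt q')" by (auto simp: slice_def)
        then have "c \<le> real (fst q')" using seg_fst_le[of "(c, y')" "gpt q" "gpt q'" "real (fst q')"] 3(3) by simp
        then show False using \<open>c > real (fst q')\<close> by simp
      qed
      then show ?thesis unfolding eq using IH by simp
    qed
  qed
qed

lemma xm_rsorted: "sorted_wrt (\<ge>) (map fst ps) \<Longrightarrow> is_interval (slice c (path_curve ps))"
proof (induction ps rule: induct_list012)
  case 1 then show ?case by (simp add: path_curve_simps slice_def)
next
  case (2 q) then show ?case by (simp add: path_curve_simps slice_single)
next
  case (3 q q' r)
  have IH: "is_interval (slice c (path_curve (q' # r)))" using 3 by simp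
  let ?S = "slice c (closed_segment (gpt q) (gpt q'))"
  let ?T = "slice c (path_curve (q' # r))"
  have eq: "slice c (path_curve (q # q' # r)) = ?S \<union> ?T" by (simp add: path_curve_simps slice_Un)
  show ?case
  proof (cases "c = real (fst q')")
    case True
    have "gpt q' \<in> closed_segment (gpt q) (gpt q')" by simp
    moreover have "gpt q' \<in> path_curve (q' # r)" by (simp add: path_curve_steps)
    ultimately have "snd (gpt q') \<in> ?S \<inter> ?T" using True by (auto simp: slice_def gpt_def)
    then show ?thesis unfolding eq using IH interval_seg by (intro interval_Un) auto
  next
    case False
    show ?thesis
    proof (cases "?T = {}")
      case True then show ?thesis unfolding eq using interval_seg by simp
    next
      case F2: False
      then obtain y where "(c, y) \<in> path_curve (q' # r)" by (auto simp: slice_def)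
      then have "c \<le> real (fst q')" using curve_fst_le[of "q' # r" "(c, y)"] 3(3) by simp
      then have "c < real (fst q')" using False by simp
      have "?S = {}"
      proof (rule ccontr)
        assume "?S \<noteq> {}"
        then obtain y' where "(c, y') \<in> closed_segment (gpt q) (gpt q')" by (auto simp: slice_def)
        then have "c \<ge> real (fst q')" using seg_fst_ge[of "(c, y')" "gpt q" "gpt q'" "real (fst q')"] 3(3) by simp
        then show False using \<open>c < real (fst q')\<close> by simp
      qed
      then show ?thesis unfolding eq using IH by simp
    qed
  qed
qed

lemma xmono_if_sorted: "sorted (map fst ps) \<or> sorted_wrt (\<ge>) (map fst ps) \<Longrightarrow> x_monotone ps"
  unfolding x_monotone_def using xm_sorted xm_rsorted by (auto simp: slice_def)



lemma steps_succ: "successively R ps \<Longrightarrow> (a, b) \<in> steps ps \<Longrightarrow> R a b"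
  by (auto simp: steps_nth successively_conv_nth)

lemma steps_sub: "steps (q' # r) \<subseteq> steps (q # q' # r)"
  by auto

lemma slice_int:
  assumes "successively grid_adj ps" "(c, y) \<in> path_curve ps" "\<forall>n::nat. c \<noteq> real n"
  shows "\<exists>n::nat. y = real n"
proof -
  from assms(2) consider (pt) q where "q \<in> set ps" "(c, y) = gpt q"
    | (seg) a b where "(a, b) \<in> steps ps" "(c, y) \<in> closed_segment (gpt a) (gpt b)"
    unfolding path_curve_steps by blast
  then show ?thesis
  proof cases
    case pt
    then have "c = real (fst q)" by (simp add: gpt_def)
    then show ?thesis using assms(3) by blast
  next
    case seg
    have adj: "grid_adj a b" using steps_succ[OF assms(1) seg(1)] .
    obtain u where u: "0 \<le> u" "u \<le> 1" "c = (1 - u) * real (fst a) + u * real (fst b)"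
      "y = (1 - u) * real (snd a) + u * real (snd b)"
      using seg_fst[OF seg(2)] by auto
    show ?thesis
    proof (cases "fst a = fst b")
      case True
      then have "c = real (fst a)" using u(3) by (simp add: algebra_simps)
      then show ?thesis using assms(3) by blast
    next
      case False
      then have "snd a = snd b" using adj by (auto simp: grid_adj_def)
      then have "y = real (snd a)" using u(4) by (simp add: algebra_simps)
      then show ?thesis by blast
    qed
  qed
qed

lemma cross_unique:
  assumes xm: "x_monotone ps" and sa: "successively grid_adj ps"
    and st: "(a, b) \<in> steps ps" "(a', b') \<in> steps ps"
    and h: "snd a = snd b" "snd a' = snd b'" and f: "fst a + fst b = fst a' + fst b'"
  shows "snd a = snd a'"
proof (rule ccontr)
  assume ne: "snd a \<noteq> snd a'"
  have adj: "grid_adj a b" "grid_adj a' b'" using steps_succ[OF sa] st by auto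
  have "fst a = fst b + 1 \<or> fst b = fst a + 1" using adj(1) h(1) unfolding grid_adj_def by linarith
  then have odd: "fst a + fst b = 2 * min (fst a) (fst b) + 1" by (auto simp: min_def)
  define c where "c = real (fst a + fst b) / 2"
  have mid: "\<And>a b. midpoint (gpt a) (gpt b) = (real (fst a + fst b) / 2, real (snd a + snd b) / 2)"
    by (simp add: midpoint_def gpt_def algebra_simps)
  have inS: "(c, real (snd a)) \<in> path_curve ps" "(c, real (snd a')) \<in> path_curve ps"
  proof -
    have "midpoint (gpt a) (gpt b) \<in> path_curve ps" unfolding path_curve_steps using st(1)
      by (intro UnI2 UN_I[of "(a,b)"]) auto
    then show "(c, real (snd a)) \<in> path_curve ps" using h(1) by (simp add: mid c_def)
    have "midpoint (gpt a') (gpt b') \<in> path_curve ps" unfolding path_curve_steps using st(2)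
      by (intro UnI2 UN_I[of "(a',b')"]) auto
    then show "(c, real (snd a')) \<in> path_curve ps" using h(2) f by (simp add: mid c_def)
  qed
  have nint: "\<forall>n::nat. c \<noteq> real n"
  proof
    fix n :: nat
    show "c \<noteq> real n"
    proof
      assume "c = real n"
      then have "real (fst a + fst b) = real (2 * n)" by (simp add: c_def)
      then have "fst a + fst b = 2 * n" by linarith
      then show False using odd by presburger
    qed
  qed
  have I: "is_interval (slice c (path_curve ps))" using xm by (simp add: x_monotone_def slice_def)
  define y where "y = real (min (snd a) (snd a')) + 1/2"
  have Iv: "\<And>u v x. u \<in> slice c (path_curve ps) \<Longrightarrow> v \<in> slice c (path_curve ps) \<Longrightarrow> u \<le> x \<Longrightarrow> x \<le> v
     \<Longrightarrow> x \<in> slice c (path_curve ps)" using I unfolding is_interval_1 by blast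
  have m1: "real (min (snd a) (snd a')) \<in> slice c (path_curve ps)"
    using inS by (simp add: slice_def min_def)
  have m2: "real (max (snd a) (snd a')) \<in> slice c (path_curve ps)"
    using inS by (simp add: slice_def max_def)
  have "min (snd a) (snd a') < max (snd a) (snd a')" using ne by (simp add: min_def max_def)
  then have "real (min (snd a) (snd a')) + 1 \<le> real (max (snd a) (snd a'))" by linarith
  then have "y \<in> slice c (path_curve ps)" using Iv[OF m1 m2, of y] by (simp add: y_def)
  then obtain n :: nat where "y = real n" using slice_int[OF sa _ nint] by (auto simp: slice_def)
  then have "2 * real (min (snd a) (snd a')) + 1 = 2 * real n" by (simp add: y_def)
  then have "2 * min (snd a) (snd a') + 1 = 2 * n" by linarith
  then show False by presburger
qed

fun crn :: "nat list \<Rightarrow> nat list" where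
  "crn (a # b # r) = (if a \<noteq> b then [min a b] else []) @ crn (b # r)"
| "crn _ = []"

lemma cr_mem: "g \<in> set (crn (map fst ps)) \<Longrightarrow> \<exists>(a,b)\<in>steps ps. fst a \<noteq> fst b \<and> min (fst a) (fst b) = g"
  by (induction ps rule: induct_list012) (auto split: if_splits)

lemma cr_distinct:
  assumes "successively grid_adj ps" "distinct ps"
    "\<And>a b a' b'. (a,b)\<in>steps ps \<Longrightarrow> (a',b')\<in>steps ps \<Longrightarrow> snd a = snd b \<Longrightarrow> snd a' = snd b' \<Longrightarrow> fst a + fst b = fst a' + fst b' \<Longrightarrow> snd a = snd a'"
  shows "distinct (crn (map fst ps))"
  using assms
proof (induction ps rule: induct_list012)
  case (3 q q' r)
  have IH: "distinct (crn (map fst (q' # r)))"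
  proof (rule 3(2))
    show "successively grid_adj (q' # r)" using 3(3) by simp
    show "distinct (q' # r)" using 3(4) by simp
    show "snd a = snd a'" if "(a, b) \<in> steps (q' # r)" "(a', b') \<in> steps (q' # r)" "snd a = snd b"
       "snd a' = snd b'" "fst a + fst b = fst a' + fst b'" for a b a' b'
      using 3(5)[of a b a' b'] that by simp
  qed
  have "min (fst q) (fst q') \<notin> set (crn (map fst (q' # r)))" if ne: "fst q \<noteq> fst q'"
  proof
    assume "min (fst q) (fst q') \<in> set (crn (map fst (q' # r)))"
    then obtain a' b' where st: "(a', b') \<in> steps (q' # r)" "fst a' \<noteq> fst b'"
      "min (fst a') (fst b') = min (fst q) (fst q')" using cr_mem by blast
    have st2: "(a', b') \<in> steps (q # q' # r)" using st(1) by simp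
    have adj: "grid_adj q q'" "grid_adj a' b'" using steps_succ[OF 3(3)] st2 by auto
    have hs: "snd q = snd q'" "snd a' = snd b'" using adj ne st(2) by (auto simp: grid_adj_def)
    have fs: "fst q + fst q' = fst a' + fst b'" using adj ne st(2,3) by (auto simp: grid_adj_def)
    have "snd q = snd a'" using 3(5)[of q q' a' b'] st2 hs fs by simp
    then have "q = a' \<or> q = b'" using adj ne st(2,3) hs by (auto simp: grid_adj_def prod_eq_iff)
    moreover have "a' \<in> set (q' # r)" "b' \<in> set (q' # r)" using steps_set[OF st(1)] by auto
    ultimately show False using 3(4) by auto
  qed
  then show ?case using IH by auto
qed auto

lemma const_sorted_wrt: "\<forall>y\<in>set r. y = b \<Longrightarrow> R b b \<Longrightarrow> sorted_wrt R (b # r)"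
  by (induction r) auto

lemma cr_aux1: "sorted (b # r) \<Longrightarrow> successively (\<lambda>x y. x \<le> y + 1 \<and> y \<le> x + 1) (b # r) \<Longrightarrow>
  \<exists>y\<in>set r. y \<noteq> b \<Longrightarrow> b \<in> set (crn (b # r))"
proof (induction r)
  case (Cons c r')
  show ?case
  proof (cases "c = b")
    case True
    then have "b \<in> set (crn (b # r'))" using Cons by (cases r') auto
    then show ?thesis using True by simp
  next
    case False
    then show ?thesis using Cons.prems by auto
  qed
qed simp

lemma cr_aux2: "sorted_wrt (\<ge>) (b # r) \<Longrightarrow> successively (\<lambda>x y. x \<le> y + 1 \<and> y \<le> x + 1) (b # r) \<Longrightarrow>
  \<exists>y\<in>set r. y \<noteq> b \<Longrightarrow> b - 1 \<in> set (crn (b # r))"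
proof (induction r)
  case (Cons c r')
  show ?case
  proof (cases "c = b")
    case True
    then have "b - 1 \<in> set (crn (b # r'))" using Cons by (cases r') auto
    then show ?thesis using True by simp
  next
    case False
    then have "c = b - 1" using Cons.prems by auto
    then show ?thesis using False by auto
  qed
qed simp

lemma cr_sorted: "successively (\<lambda>x y. x \<le> y + 1 \<and> y \<le> x + 1) xs \<Longrightarrow> distinct (crn xs) \<Longrightarrow>
   sorted xs \<or> sorted_wrt (\<ge>) xs"
proof (induction xs rule: induct_list012)
  case (3 a b r)
  have IH: "sorted (b # r) \<or> sorted_wrt (\<ge>) (b # r)" using 3 by auto
  consider "a = b" | "a = b + 1" | "b = a + 1" using 3(3) by force
  then show ?case
  proof cases
    case 1 then show ?thesis using IH by auto
  next
    case 2
    show ?thesis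
    proof (cases "sorted_wrt (\<ge>) (b # r)")
      case True then show ?thesis using 2 by auto
    next
      case False
      then have s: "sorted (b # r)" using IH by auto
      show ?thesis
      proof (cases "\<exists>y\<in>set r. y \<noteq> b")
        case True
        then have "b \<in> set (crn (b # r))" using cr_aux1[OF s] 3(3) by auto
        then show ?thesis using 3(4) 2 by auto
      next
        case F: False
        then have "sorted_wrt (\<ge>) (b # r)" by (intro const_sorted_wrt) auto
        then show ?thesis using False by simp
      qed
    qed
  next
    case 2: 3
    show ?thesis
    proof (cases "sorted (b # r)")
      case True then show ?thesis using 2 by auto
    next
      case False
      then have s: "sorted_wrt (\<ge>) (b # r)" using IH by auto
      show ?thesis
      proof (cases "\<exists>y\<in>set r. y \<noteq> b")
        case True
        then have "b - 1 \<in> set (crn (b # r))" using cr_aux2[OF s] 3(3) by auto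
        then show ?thesis using 3(4) 2 by auto
      next
        case F: False
        then have "sorted_wrt (\<le>) (b # r)" by (intro const_sorted_wrt) auto
        then show ?thesis using False by simp
      qed
    qed
  qed
qed auto

lemma xmono_sorted:
  assumes "x_monotone ps" "successively grid_adj ps" "distinct ps"
  shows "sorted (map fst ps) \<or> sorted_wrt (\<ge>) (map fst ps)"
proof -
  have "distinct (crn (map fst ps))"
    using cr_distinct[OF assms(2,3)] cross_unique[OF assms(1,2)] by metis
  moreover have "successively (\<lambda>x y. x \<le> y + 1 \<and> y \<le> x + 1) (map fst ps)"
    unfolding successively_map using assms(2) by (rule successively_mono) (auto simp: grid_adj_def)
  ultimately show ?thesis using cr_sorted by blast
qed



definition sc :: "gpoint \<Rightarrow> gpoint" where "sc p = (2 * fst p, 2 * snd p)"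
definition mid :: "gpoint \<Rightarrow> gpoint \<Rightarrow> gpoint" where "mid a c = (fst a + fst c, snd a + snd c)"
definition dA :: "gpoint \<Rightarrow> gpoint" where "dA p = (2 * fst p, 2 * snd p + 1)"
definition dB :: "gpoint \<Rightarrow> gpoint" where "dB p = (2 * fst p + 1, 2 * snd p + 1)"
definition rtP :: "gpoint \<Rightarrow> gpoint" where "rtP p = (fst p + 1, snd p)"
definition upP :: "gpoint \<Rightarrow> gpoint" where "upP p = (fst p, snd p + 1)"

definition inner :: "(gpoint \<Rightarrow> bool) \<Rightarrow> gpoint \<Rightarrow> gpoint \<Rightarrow> gpoint list" where
  "inner F a c = (if c = rtP a \<and> F a then [dA a, dB a, mid a c]
     else if a = rtP c \<and> F c then [mid a c, dB c, dA c] else [mid a c])"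

fun gp :: "(gpoint \<Rightarrow> bool) \<Rightarrow> gpoint list \<Rightarrow> gpoint list" where
  "gp F [] = []"
| "gp F [a] = [sc a]"
| "gp F (a # c # r) = sc a # inner F a c @ gp F (c # r)"

lemma gp_Cons: "\<exists>t. gp F (c # r) = sc c # t"
  by (cases r) auto

lemma pe_app: "path_edges (xs @ y # zs) = path_edges (xs @ [y]) \<union> path_edges (y # zs)"
proof (induction xs)
  case Nil then show ?case by (simp add: path_edges_simps)
next
  case (Cons x xs)
  then show ?case by (cases xs) (auto simp: path_edges_simps)
qed

definition stepE :: "(gpoint \<Rightarrow> bool) \<Rightarrow> gpoint \<Rightarrow> gpoint \<Rightarrow> gpoint set set" where
  "stepE F a c = path_edges (sc a # inner F a c @ [sc c])"

lemma gp_edges: "path_edges (gp F ps) = (\<Union>(a,c)\<in>steps ps. stepE F a c)"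
proof (induction F ps rule: gp.induct)
  case (3 F a c r)
  obtain t where t: "gp F (c # r) = sc c # t" using gp_Cons by blast
  have "gp F (a # c # r) = (sc a # inner F a c) @ sc c # t" using t by simp
  then have "path_edges (gp F (a # c # r)) = stepE F a c \<union> path_edges (gp F (c # r))"
    unfolding stepE_def using t pe_app[of "sc a # inner F a c" "sc c" t] by simp
  then show ?case using 3 by simp
qed (auto simp: path_edges_simps)

lemma gp_set: "ps \<noteq> [] \<Longrightarrow> set (gp F ps) = sc ` set ps \<union> (\<Union>(a,c)\<in>steps ps. set (inner F a c))"
  by (induction F ps rule: gp.induct) auto

lemma succ_join: "successively R (xs @ [y]) \<Longrightarrow> successively R (y # zs) \<Longrightarrow> successively R (xs @ y # zs)"
  by (auto simp: successively_append_iff)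

lemma gp_succ: "(\<And>a c. (a, c) \<in> steps ps \<Longrightarrow> successively R (sc a # inner F a c @ [sc c]))
   \<Longrightarrow> successively R (gp F ps)"
proof (induction F ps rule: gp.induct)
  case (3 F a c r)
  obtain t where t: "gp F (c # r) = sc c # t" using gp_Cons by blast
  have "gp F (a # c # r) = (sc a # inner F a c) @ sc c # t" using t by simp
  moreover have "successively R (sc c # t)" using 3 t by simp
  moreover have "successively R ((sc a # inner F a c) @ [sc c])" using 3(2)[of a c] by simp
  ultimately show ?case using succ_join by metis
qed auto


lemma step_adj: "grid_adj a c \<Longrightarrow> successively grid_adj (sc a # inner F a c @ [sc c])"
  unfolding inner_def sc_def dA_def dB_def mid_def rtP_def grid_adj_def
  by (auto simp: prod_eq_iff)

lemma step_le: "fst a \<le> fst c \<Longrightarrow> successively (\<lambda>p q. fst p \<le> fst q) (sc a # inner F a c @ [sc c])"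
  unfolding inner_def sc_def dA_def dB_def mid_def rtP_def
  by (auto simp: prod_eq_iff)

lemma step_ge: "fst c \<le> fst a \<Longrightarrow> successively (\<lambda>p q. fst q \<le> fst p) (sc a # inner F a c @ [sc c])"
  unfolding inner_def sc_def dA_def dB_def mid_def rtP_def
  by (auto simp: prod_eq_iff)

lemma sorted_succ: "sorted xs \<longleftrightarrow> successively (\<le>) (xs :: nat list)"
  by (rule successively_conv_sorted_wrt[symmetric]) (auto simp: transp_def)

lemma rsorted_succ: "sorted_wrt (\<ge>) xs \<longleftrightarrow> successively (\<ge>) (xs :: nat list)"
  by (rule successively_conv_sorted_wrt[symmetric]) (auto simp: transp_def)

lemma gp_sorted: "sorted (map fst ps) \<Longrightarrow> sorted (map fst (gp F ps))"
  unfolding sorted_succ successively_map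
  by (rule gp_succ, rule step_le) (auto dest: steps_succ)

lemma gp_rsorted: "sorted_wrt (\<ge>) (map fst ps) \<Longrightarrow> sorted_wrt (\<ge>) (map fst (gp F ps))"
  unfolding rsorted_succ successively_map
  by (rule gp_succ, rule step_ge) (auto dest: steps_succ)

lemma gp_adj: "successively grid_adj ps \<Longrightarrow> successively grid_adj (gp F ps)"
  by (rule gp_succ, rule step_adj) (auto dest: steps_succ)

lemma mid_inj: "grid_adj a c \<Longrightarrow> grid_adj a' c' \<Longrightarrow> mid a c = mid a' c' \<Longrightarrow> {a, c} = {a', c'}"
  unfolding grid_adj_def mid_def doubleton_eq_iff prod_eq_iff
  by (elim disjE conjE; simp; presburger)

lemma mid_par: "grid_adj a c \<Longrightarrow> (even (fst (mid a c)) \<and> odd (snd (mid a c))) \<or> (odd (fst (mid a c)) \<and> even (snd (mid a c)))"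
  unfolding grid_adj_def mid_def by auto

lemma inner_char: "x \<in> set (inner F a c) \<Longrightarrow> x = mid a c \<or>
   (\<exists>P. F P \<and> (a = P \<and> c = rtP P \<or> c = P \<and> a = rtP P) \<and> (x = dA P \<or> x = dB P))"
proof (cases "c = rtP a \<and> F a")
  case True
  assume "x \<in> set (inner F a c)"
  then have "x = dA a \<or> x = dB a \<or> x = mid a c" using True by (simp add: inner_def)
  then show ?thesis using True by blast
next
  case False
  assume x: "x \<in> set (inner F a c)"
  show ?thesis
  proof (cases "a = rtP c \<and> F c")
    case True
    then have "x = dA c \<or> x = dB c \<or> x = mid a c" using False x by (auto simp: inner_def)
    then show ?thesis using True by blast
  next
    case F2: False
    have "inner F a c = [mid a c]" using False F2 by (simp add: inner_def)
    then show ?thesis using x by simp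
  qed
qed

lemma inner_distinct: "distinct (inner F a c)"
  unfolding inner_def dA_def dB_def mid_def rtP_def by (auto simp: prod_eq_iff)

lemma inner_nosc: "grid_adj a c \<Longrightarrow> x \<in> set (inner F a c) \<Longrightarrow> x \<noteq> sc p"
proof
  assume adj: "grid_adj a c" and x: "x \<in> set (inner F a c)" and xs: "x = sc p"
  have ev: "even (fst x)" "even (snd x)" using xs by (auto simp: sc_def)
  from inner_char[OF x] show False
  proof
    assume "x = mid a c" then show False using mid_par[OF adj] ev by auto
  next
    assume "\<exists>P. F P \<and> (a = P \<and> c = rtP P \<or> c = P \<and> a = rtP P) \<and> (x = dA P \<or> x = dB P)"
    then obtain P where "x = dA P \<or> x = dB P" by blast
    then show False using ev by (auto simp: dA_def dB_def)
  qed
qed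

lemma edge_char: "e \<in> stepE F a c \<Longrightarrow> e = {sc a, mid a c} \<or> e = {sc c, mid a c} \<or>
   (\<exists>P. F P \<and> (a = P \<and> c = rtP P \<or> c = P \<and> a = rtP P) \<and> (e = {sc P, dA P} \<or> e = {dA P, dB P} \<or> e = {dB P, mid a c}))"
proof (cases "c = rtP a \<and> F a")
  case True
  assume e: "e \<in> stepE F a c"
  have "stepE F a c = {{sc a, dA a}, {dA a, dB a}, {dB a, mid a c}, {mid a c, sc c}}"
    using True by (simp add: stepE_def inner_def path_edges_simps)
  then have "e = {sc a, dA a} \<or> e = {dA a, dB a} \<or> e = {dB a, mid a c} \<or> e = {mid a c, sc c}"
    using e by simp
  moreover have "{mid a c, sc c} = {sc c, mid a c}" by (rule insert_commute)
  ultimately show ?thesis using True by metis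
next
  case False
  assume e: "e \<in> stepE F a c"
  show ?thesis
  proof (cases "a = rtP c \<and> F c")
    case True
    have "stepE F a c = {{sc a, mid a c}, {mid a c, dB c}, {dB c, dA c}, {dA c, sc c}}"
      using True False by (auto simp: stepE_def inner_def path_edges_simps)
    then have "e = {sc a, mid a c} \<or> e = {mid a c, dB c} \<or> e = {dB c, dA c} \<or> e = {dA c, sc c}"
      using e by simp
    moreover have "{mid a c, dB c} = {dB c, mid a c}" "{dB c, dA c} = {dA c, dB c}" "{dA c, sc c} = {sc c, dA c}"
      by (auto simp: insert_commute)
    ultimately show ?thesis using True by metis
  next
    case F2: False
    have "inner F a c = [mid a c]" using False F2 by (simp add: inner_def)
    then have "stepE F a c = {{sc a, mid a c}, {mid a c, sc c}}"
      by (simp add: stepE_def path_edges_simps)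
    then show ?thesis using e by (auto simp: insert_commute)
  qed
qed



lemma dA_mid: "dA P = mid P (upP P)" by (simp add: dA_def mid_def upP_def)
lemma adj_up: "grid_adj P (upP P)" by (simp add: grid_adj_def upP_def)
lemma adj_rt: "grid_adj P (rtP P)" by (simp add: grid_adj_def rtP_def)
lemma up_eq: "up_edge P = {P, upP P}" by (simp add: up_edge_def upP_def)
lemma rt_eq: "right_edge P = {P, rtP P}" by (simp add: right_edge_def rtP_def)

lemma inner_disj:
  assumes adj: "grid_adj a c" "grid_adj a' c'" and ne: "{a, c} \<noteq> {a', c'}"
    and up: "\<And>P. F P \<Longrightarrow> up_edge P \<noteq> {a, c} \<and> up_edge P \<noteq> {a', c'}"
  shows "set (inner F a c) \<inter> set (inner F a' c') = {}"
proof (rule ccontr)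
  assume "set (inner F a c) \<inter> set (inner F a' c') \<noteq> {}"
  then obtain x where x: "x \<in> set (inner F a c)" "x \<in> set (inner F a' c')" by blast
  have dAB: "\<And>P P'. dA P = dA P' \<Longrightarrow> P = P'" "\<And>P P'. dB P = dB P' \<Longrightarrow> P = P'"
    "\<And>P P'. dA P \<noteq> dB P'"
  proof -
    show "\<And>P P'. dA P = dA P' \<Longrightarrow> P = P'" "\<And>P P'. dB P = dB P' \<Longrightarrow> P = P'"
      by (auto simp: dA_def dB_def prod_eq_iff)
    show "\<And>P P'. dA P \<noteq> dB P'"
    proof
      fix P P' assume "dA P = dB P'"
      then have "2 * fst P = 2 * fst P' + 1" by (auto simp: dA_def dB_def)
      then show False by presburger
    qed
  qed
  have dBmid: "\<And>P a c. grid_adj a c \<Longrightarrow> dB P \<noteq> mid a c"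
  proof
    fix P a c assume "grid_adj a c" "dB P = mid a c"
    then have "mid a c = (2 * fst P + 1, 2 * snd P + 1)" by (simp add: dB_def)
    then show False using mid_par[of a c] \<open>grid_adj a c\<close> by simp
  qed
  have dAmid: "\<And>P a c. grid_adj a c \<Longrightarrow> F P \<Longrightarrow> dA P = mid a c \<Longrightarrow> up_edge P = {a, c}"
    using mid_inj[OF adj_up] dA_mid up_eq by metis
  have re: "\<And>P a c. (a = P \<and> c = rtP P \<or> c = P \<and> a = rtP P) \<Longrightarrow> {a, c} = {P, rtP P}"
    by (elim disjE conjE) (simp_all add: insert_commute)
  from inner_char[OF x(1)] re consider (m1) "x = mid a c"
    | (d1) P where "F P" "{a, c} = {P, rtP P}" "x = dA P \<or> x = dB P" by metis
  note c1 = this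
  from inner_char[OF x(2)] re consider (m2) "x = mid a' c'"
    | (d2) P where "F P" "{a', c'} = {P, rtP P}" "x = dA P \<or> x = dB P" by metis
  note c2 = this
  show False
  proof (cases rule: c1)
    case m1
    then show False
    proof (cases rule: c2)
      case m2 then show False using m1 mid_inj[OF adj] ne by simp
    next
      case (d2 P)
      then show False using m1 dAmid[OF adj(1)] dBmid[OF adj(1)] up by metis
    qed
  next
    case (d1 P)
    then show False
    proof (cases rule: c2)
      case m2 then show False using d1 dAmid[OF adj(2)] dBmid[OF adj(2)] up by metis
    next
      case (d2 P')
      then have "P = P'" using d1 dAB by metis
      then show False using d1 d2 ne by simp
    qed
  qed
qed

lemma gp_distinct:
  "distinct ps \<Longrightarrow> successively grid_adj ps \<Longrightarrow>
   (\<And>P a c. F P \<Longrightarrow> (a, c) \<in> steps ps \<Longrightarrow> up_edge P \<noteq> {a, c}) \<Longrightarrow> distinct (gp F ps)"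
proof (induction F ps rule: gp.induct)
  case (3 F a c r)
  have adj: "grid_adj a c" using 3(3) by simp
  have IH: "distinct (gp F (c # r))"
    using 3(1) 3(2,3) 3(4) by simp
  have S: "set (gp F (c # r)) = sc ` set (c # r) \<union> (\<Union>(a,c)\<in>steps (c # r). set (inner F a c))"
    using gp_set by blast
  have sci: "\<And>x y. sc x = sc y \<Longrightarrow> x = y" by (auto simp: sc_def prod_eq_iff)
  have A: "sc a \<notin> set (inner F a c)" using inner_nosc[OF adj] by blast
  have B: "sc a \<notin> set (gp F (c # r))"
  proof
    assume "sc a \<in> set (gp F (c # r))"
    then consider x where "x \<in> set (c # r)" "sc a = sc x"
      | a' c' where "(a', c') \<in> steps (c # r)" "sc a \<in> set (inner F a' c')" unfolding S by blast
    then show False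
    proof cases
      case 1
      then have "a = x" using sci by blast
      then show False using 3(2) 1(1) by auto
    next
      case 2
      have "grid_adj a' c'" using steps_succ[OF 3(3)] 2(1) by simp
      then show False using inner_nosc 2(2) by blast
    qed
  qed
  have C: "set (inner F a c) \<inter> set (gp F (c # r)) = {}"
  proof (rule ccontr)
    assume "set (inner F a c) \<inter> set (gp F (c # r)) \<noteq> {}"
    then obtain y where y: "y \<in> set (inner F a c)" "y \<in> set (gp F (c # r))" by blast
    from y(2) consider x where "x \<in> set (c # r)" "y = sc x"
      | a' c' where "(a', c') \<in> steps (c # r)" "y \<in> set (inner F a' c')" unfolding S by blast
    then show False
    proof cases
      case 1 then show False using inner_nosc[OF adj y(1)] by blast
    next
      case 2
      have adj2: "grid_adj a' c'" using steps_succ[OF 3(3)] 2(1) by simp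
      have "a' \<in> set (c # r)" "c' \<in> set (c # r)" using steps_set[OF 2(1)] by auto
      then have ne: "{a, c} \<noteq> {a', c'}" using 3(2) by (auto simp: doubleton_eq_iff)
      have "set (inner F a c) \<inter> set (inner F a' c') = {}"
        by (rule inner_disj[OF adj adj2 ne]) (use 3(4) 2(1) in auto)
      then show False using y(1) 2(2) by blast
    qed
  qed
  show ?case using A B C IH inner_distinct[of F a c] by auto
qed auto

lemma gp_grid:
  assumes "\<forall>p\<in>set ps. grid_point w h p" "successively grid_adj ps" "\<And>P. F P \<Longrightarrow> snd P < h" "ps \<noteq> []"
  shows "\<forall>x\<in>set (gp F ps). grid_point (2 * w) (2 * h) x"
proof
  fix x assume "x \<in> set (gp F ps)"
  then consider p where "p \<in> set ps" "x = sc p" | a c where "(a, c) \<in> steps ps" "x \<in> set (inner F a c)"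
    using gp_set[OF assms(4)] by blast
  then show "grid_point (2 * w) (2 * h) x"
  proof cases
    case 1 then show ?thesis using assms(1) by (auto simp: grid_point_def sc_def)
  next
    case 2
    have g: "grid_point w h a" "grid_point w h c" using steps_set[OF 2(1)] assms(1) by auto
    from inner_char[OF 2(2)] consider (m) "x = mid a c"
      | (d) P where "F P" "(a = P \<and> c = rtP P) \<or> (c = P \<and> a = rtP P)" "x = dA P \<or> x = dB P"
      by blast
    then show ?thesis
    proof cases
      case m then show ?thesis using g by (auto simp: grid_point_def mid_def)
    next
      case d
      then show ?thesis using g assms(3)[of P] by (auto simp: grid_point_def dA_def dB_def rtP_def)
    qed
  qed
qed



lemma sc_par: "even (fst (sc p))" "even (snd (sc p))" by (auto simp: sc_def)

lemma P1: assumes "grid_adj x y" "grid_adj x' y'" "{sc p, mid x y} = {sc q, mid x' y'}"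
  shows "{x, y} = {x', y'}"
proof -
  have "sc p \<noteq> mid x' y'" using mid_par[OF assms(2)] sc_par[of p] by metis
  then have "mid x y = mid x' y'" using assms(3) by (auto simp: doubleton_eq_iff)
  then show ?thesis using mid_inj assms by blast
qed

lemma P2: "grid_adj x y \<Longrightarrow> {sc p, mid x y} \<noteq> {dA P, dB P}"
proof
  assume "grid_adj x y" "{sc p, mid x y} = {dA P, dB P}"
  then have "sc p = dA P \<or> sc p = dB P" by (auto simp: doubleton_eq_iff)
  moreover have "odd (snd (dA P))" "odd (snd (dB P))" by (auto simp: dA_def dB_def)
  ultimately show False using sc_par[of p] by metis
qed

lemma mid_rt: "mid P (rtP P) = (2 * fst P + 1, 2 * snd P)" by (simp add: mid_def rtP_def)

lemma P3: "grid_adj x y \<Longrightarrow> {sc p, mid x y} \<noteq> {dB P, mid P (rtP P)}"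
proof
  assume a: "grid_adj x y" "{sc p, mid x y} = {dB P, mid P (rtP P)}"
  have "odd (fst (dB P))" "odd (fst (mid P (rtP P)))" by (auto simp: dB_def mid_rt)
  moreover have "sc p = dB P \<or> sc p = mid P (rtP P)" using a(2) by (auto simp: doubleton_eq_iff)
  ultimately show False using sc_par[of p] by metis
qed

lemma P4: "{dA P, dB P} \<noteq> {dB P', mid P' (rtP P')}"
proof
  assume a: "{dA P, dB P} = {dB P', mid P' (rtP P')}"
  have "odd (fst (dB P'))" "odd (fst (mid P' (rtP P')))" "even (fst (dA P))" by (auto simp: dB_def dA_def mid_rt)
  moreover have "dA P = dB P' \<or> dA P = mid P' (rtP P')" using a by (auto simp: doubleton_eq_iff)
  ultimately show False by metis
qed

lemma P5: "{dA P, dB P} = {dA P', dB P'} \<Longrightarrow> P = P'"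
proof -
  assume a: "{dA P, dB P} = {dA P', dB P'}"
  have "even (fst (dA P'))" "odd (fst (dB P))" by (auto simp: dB_def dA_def)
  then have "dB P \<noteq> dA P'" by metis
  then have "dB P = dB P'" using a by (auto simp: doubleton_eq_iff)
  then show "P = P'" by (auto simp: dB_def prod_eq_iff)
qed

lemma P6: "{dB P, mid P (rtP P)} = {dB P', mid P' (rtP P')} \<Longrightarrow> P = P'"
proof -
  assume a: "{dB P, mid P (rtP P)} = {dB P', mid P' (rtP P')}"
  have "odd (snd (dB P))" "even (snd (mid P' (rtP P')))" by (auto simp: dB_def mid_rt)
  then have "dB P \<noteq> mid P' (rtP P')" by metis
  then have "dB P = dB P'" using a by (auto simp: doubleton_eq_iff)
  then show "P = P'" by (auto simp: dB_def prod_eq_iff)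
qed

lemma P7: "{P, upP P} = {P', upP P'} \<Longrightarrow> P = P'"
  by (auto simp: doubleton_eq_iff upP_def prod_eq_iff)

lemma P8: "{P, rtP P} = {P', rtP P'} \<Longrightarrow> P = P'"
  by (auto simp: doubleton_eq_iff rtP_def prod_eq_iff)

lemma mid_comm: "mid a c = mid c a" by (simp add: mid_def add.commute)

lemma steps_pe: "(a, c) \<in> steps ps \<Longrightarrow> {a, c} \<in> path_edges ps"
  by (auto simp: path_edges_steps)

lemma classify:
  assumes e: "e \<in> path_edges (gp F ps)" and adj: "successively grid_adj ps"
  shows "(\<exists>x y. grid_adj x y \<and> e = {sc x, mid x y} \<and>
            ({x, y} \<in> path_edges ps \<or> (\<exists>P. {x, y} = {P, upP P} \<and> F P \<and> {P, rtP P} \<in> path_edges ps)))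
       \<or> (\<exists>P. F P \<and> {P, rtP P} \<in> path_edges ps \<and> (e = {dA P, dB P} \<or> e = {dB P, mid P (rtP P)}))"
proof -
  obtain a c where st: "(a, c) \<in> steps ps" and ec: "e \<in> stepE F a c"
    using e unfolding gp_edges by blast
  have ac: "grid_adj a c" using steps_succ[OF adj st] .
  have ca: "grid_adj c a" using ac by (auto simp: grid_adj_def)
  have pe: "{a, c} \<in> path_edges ps" using steps_pe[OF st] .
  have pe': "{c, a} \<in> path_edges ps" using pe by (simp add: insert_commute)
  from edge_char[OF ec] show ?thesis
  proof (elim disjE)
    assume "e = {sc a, mid a c}" then show ?thesis using ac pe by blast
  next
    assume "e = {sc c, mid a c}" then have "e = {sc c, mid c a}" by (simp add: mid_comm)
    then show ?thesis using ca pe' by blast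
  next
    assume "\<exists>P. F P \<and> (a = P \<and> c = rtP P \<or> c = P \<and> a = rtP P) \<and>
      (e = {sc P, dA P} \<or> e = {dA P, dB P} \<or> e = {dB P, mid a c})"
    then obtain P where P: "F P" "a = P \<and> c = rtP P \<or> c = P \<and> a = rtP P"
      "e = {sc P, dA P} \<or> e = {dA P, dB P} \<or> e = {dB P, mid a c}" by blast
    have ePr: "{a, c} = {P, rtP P}" using P(2) by (auto simp: insert_commute)
    then have pr: "{P, rtP P} \<in> path_edges ps" using pe by simp
    have mm: "mid a c = mid P (rtP P)" using P(2) mid_comm by metis
    from P(3) show ?thesis
    proof (elim disjE)
      assume "e = {sc P, dA P}"
      then have "e = {sc P, mid P (upP P)}" by (simp add: dA_mid)
      then show ?thesis using adj_up[of P] P(1) pr by blast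
    next
      assume "e = {dA P, dB P}"
      then show ?thesis using P(1) pr by (intro disjI2 exI[of _ P]) simp
    next
      assume "e = {dB P, mid a c}"
      then have "e = {dB P, mid P (rtP P)}" using mm by simp
      then show ?thesis using P(1) pr by (intro disjI2 exI[of _ P]) simp
    qed
  qed
qed


lemma pe_steps: "e \<in> path_edges ps \<Longrightarrow> \<exists>a c. (a, c) \<in> steps ps \<and> e = {a, c}"
  by (auto simp: path_edges_steps)

lemma E_rt: assumes "(a, c) \<in> steps ps" "{a, c} = {P, rtP P}" "F P"
  shows "{sc P, dA P} \<in> path_edges (gp F ps)"
proof -
  have ne: "rtP P \<noteq> P" by (simp add: rtP_def prod_eq_iff)
  have "(a = P \<and> c = rtP P) \<or> (a = rtP P \<and> c = P)" using assms(2) ne by (auto simp: doubleton_eq_iff)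
  then have "{sc P, dA P} \<in> stepE F a c"
  proof
    assume h: "a = P \<and> c = rtP P"
    then have "inner F a c = [dA a, dB a, mid a c]" using assms(3) by (simp add: inner_def)
    then show ?thesis using h by (simp add: stepE_def path_edges_simps)
  next
    assume h: "a = rtP P \<and> c = P"
    have "c \<noteq> rtP a" using h by (simp add: rtP_def prod_eq_iff)
    then have "inner F a c = [mid a c, dB c, dA c]" using assms(3) h by (simp add: inner_def)
    then show ?thesis using h by (simp add: stepE_def path_edges_simps insert_commute)
  qed
  then show ?thesis using assms(1) unfolding gp_edges by blast
qed

lemma E_up: assumes "(a, c) \<in> steps ps" "{a, c} = {P, upP P}"
  shows "{sc P, dA P} \<in> path_edges (gp F ps)"
proof -
  have ne: "upP P \<noteq> P" by (simp add: upP_def prod_eq_iff)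
  have h: "(a = P \<and> c = upP P) \<or> (a = upP P \<and> c = P)" using assms(2) ne by (auto simp: doubleton_eq_iff)
  then have "c \<noteq> rtP a" "a \<noteq> rtP c" by (auto simp: rtP_def upP_def prod_eq_iff)
  then have "inner F a c = [mid a c]" by (simp add: inner_def)
  then have S: "stepE F a c = {{sc a, mid a c}, {mid a c, sc c}}" by (simp add: stepE_def path_edges_simps)
  have "{sc P, dA P} \<in> stepE F a c"
    using h unfolding S dA_mid by (auto simp: mid_comm insert_commute)
  then show ?thesis using assms(1) unfolding gp_edges by blast
qed

lemma vp_succ: "vertex_path w h ps \<Longrightarrow> successively grid_adj ps"
  by (simp add: vertex_path_def successively_conv_nth)

lemma vp_pe: "{x, y} \<in> path_edges ps \<Longrightarrow> x \<in> set ps \<and> y \<in> set ps"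
proof -
  assume "{x, y} \<in> path_edges ps"
  then obtain a c where "(a, c) \<in> steps ps" "{x, y} = {a, c}" using pe_steps by blast
  moreover have "a \<in> set ps" "c \<in> set ps" using steps_set[OF \<open>(a, c) \<in> steps ps\<close>] by auto
  ultimately show ?thesis by (auto simp: doubleton_eq_iff)
qed



theorem lemma1:
  fixes V :: "'v set" and E :: "'v \<Rightarrow> 'v \<Rightarrow> bool" and RV :: "'v \<Rightarrow> gpoint list"
    and w h :: nat
  assumes "simple_graph V E"
    and "proper_VPG_rep w h V E RV"
  shows "\<forall>V' E'. subgraph V' E' V E \<longrightarrow>
           (\<exists>RE :: 'v \<Rightarrow> gpoint list. EPG_rep (2 * w) (2 * h) V' E' RE \<and>
              ((\<forall>v\<in>V. x_monotone (RV v)) \<longrightarrow> (\<forall>v\<in>V'. x_monotone (RE v))))"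
proof (intro allI impI)
  fix V' E' assume sub: "subgraph V' E' V E"
  have sg': "simple_graph V' E'" and VV: "V' \<subseteq> V" and EE: "\<And>u v. E' u v \<Longrightarrow> E u v"
    using sub by (auto simp: subgraph_def)
  have symE': "\<And>u v. E' u v \<Longrightarrow> E' v u" using sg' by (auto simp: simple_graph_def)
  have vp: "\<And>v. v \<in> V \<Longrightarrow> vertex_path w h (RV v)"
    using assms(2) by (auto simp: proper_VPG_rep_def VPG_rep_def)
  have Eiff: "\<And>u v. u \<in> V \<Longrightarrow> v \<in> V \<Longrightarrow> u \<noteq> v \<Longrightarrow> E u v \<Longrightarrow> set (RV u) \<inter> set (RV v) \<noteq> {}"
    using assms(2) by (auto simp: proper_VPG_rep_def VPG_rep_def)
  have disj: "\<And>u v ed. u \<in> V \<Longrightarrow> v \<in> V \<Longrightarrow> ed \<in> path_edges (RV u) \<Longrightarrow> ed \<in> path_edges (RV v) \<Longrightarrow> u = v"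
    using assms(2) unfolding proper_VPG_rep_def by blast
  have cross: "\<And>u v p. u \<in> V \<Longrightarrow> v \<in> V \<Longrightarrow> u \<noteq> v \<Longrightarrow> p \<in> set (RV u) \<Longrightarrow> p \<in> set (RV v) \<Longrightarrow>
     (right_edge p \<in> path_edges (RV u) \<and> up_edge p \<in> path_edges (RV v)) \<or>
     (right_edge p \<in> path_edges (RV v) \<and> up_edge p \<in> path_edges (RV u))"
    using assms(2) unfolding proper_VPG_rep_def by blast
  define F where "F u P \<longleftrightarrow> (\<exists>v\<in>V'. v \<noteq> u \<and> E' u v \<and> up_edge P \<in> path_edges (RV v))" for u P
  define RE where "RE u = gp (F u) (RV u)" for u
  have Fnot: "\<And>u P. u \<in> V \<Longrightarrow> F u P \<Longrightarrow> up_edge P \<notin> path_edges (RV u)"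
  proof
    fix u P assume uV: "u \<in> V" and "F u P" and pu: "up_edge P \<in> path_edges (RV u)"
    then obtain v where "v \<in> V'" "v \<noteq> u" "up_edge P \<in> path_edges (RV v)" unfolding F_def by blast
    then show False using disj[OF uV _ pu, of v] VV by blast
  qed
  have Fh: "\<And>u P. F u P \<Longrightarrow> snd P < h"
  proof -
    fix u P assume "F u P"
    then obtain v where v: "v \<in> V" "up_edge P \<in> path_edges (RV v)" using VV unfolding F_def by blast
    then have "upP P \<in> set (RV v)" using vp_pe[of P "upP P"] by (simp add: up_eq)
    then have "grid_point w h (upP P)" using vp[OF v(1)] by (auto simp: vertex_path_def)
    then show "snd P < h" by (simp add: grid_point_def upP_def)
  qed
  have vpE: "vertex_path (2 * w) (2 * h) (RE u)" if u: "u \<in> V'" for u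
  proof -
    have uV: "u \<in> V" using u VV by blast
    have vpu: "vertex_path w h (RV u)" using vp[OF uV] .
    have ne: "RV u \<noteq> []" and di: "distinct (RV u)" and gr: "\<forall>p\<in>set (RV u). grid_point w h p"
      using vpu by (auto simp: vertex_path_def)
    have su: "successively grid_adj (RV u)" using vp_succ[OF vpu] .
    have "RE u \<noteq> []"
    proof -
      obtain c r where cr: "RV u = c # r" using ne by (cases "RV u") auto
      obtain t where "gp (F u) (c # r) = sc c # t" using gp_Cons by blast
      then show ?thesis unfolding RE_def using cr by simp
    qed
    moreover have "distinct (RE u)" unfolding RE_def
    proof (rule gp_distinct[OF di su])
      fix P a c assume "F u P" "(a, c) \<in> steps (RV u)"
      then show "up_edge P \<noteq> {a, c}" using Fnot[OF uV, of P] steps_pe[of a c "RV u"] by auto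
    qed
    moreover have "\<forall>x\<in>set (RE u). grid_point (2 * w) (2 * h) x"
      unfolding RE_def by (rule gp_grid[OF gr su _ ne]) (rule Fh)
    moreover have "successively grid_adj (RE u)" unfolding RE_def using gp_adj[OF su] .
    ultimately show ?thesis by (simp add: vertex_path_def successively_conv_nth)
  qed
  show "\<exists>RE :: 'v \<Rightarrow> gpoint list. EPG_rep (2 * w) (2 * h) V' E' RE \<and>
              ((\<forall>v\<in>V. x_monotone (RV v)) \<longrightarrow> (\<forall>v\<in>V'. x_monotone (RE v)))"
  proof (intro exI[of _ RE] conjI impI ballI)
    fix u assume xm: "\<forall>v\<in>V. x_monotone (RV v)" and u: "u \<in> V'"
    have uV: "u \<in> V" using u VV by blast
    have vpu: "vertex_path w h (RV u)" using vp[OF uV] .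
    have "sorted (map fst (RV u)) \<or> sorted_wrt (\<ge>) (map fst (RV u))"
      using xmono_sorted[of "RV u"] xm uV vp_succ[OF vpu] vpu by (auto simp: vertex_path_def)
    then have "sorted (map fst (RE u)) \<or> sorted_wrt (\<ge>) (map fst (RE u))"
      unfolding RE_def using gp_sorted gp_rsorted by blast
    then show "x_monotone (RE u)" by (rule xmono_if_sorted)
  next
    show "EPG_rep (2 * w) (2 * h) V' E' RE"
      unfolding EPG_rep_def
    proof (intro conjI ballI impI)
      fix u assume "u \<in> V'" then show "vertex_path (2 * w) (2 * h) (RE u)" by (rule vpE)
    next
      fix u v assume u: "u \<in> V'" and v: "v \<in> V'" and uv: "u \<noteq> v"
      have uV: "u \<in> V" and vV: "v \<in> V" using u v VV by auto
      show "E' u v \<longleftrightarrow> path_edges (RE u) \<inter> path_edges (RE v) \<noteq> {}"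
      proof
        assume e: "E' u v"
        obtain p where p: "p \<in> set (RV u)" "p \<in> set (RV v)" using Eiff[OF uV vV uv EE[OF e]] by blast
        from cross[OF uV vV uv p] show "path_edges (RE u) \<inter> path_edges (RE v) \<noteq> {}"
        proof
          assume h: "right_edge p \<in> path_edges (RV u) \<and> up_edge p \<in> path_edges (RV v)"
          have "F u p" unfolding F_def using v uv e h by (intro bexI[of _ v]) auto
          obtain a c where ac: "(a, c) \<in> steps (RV u)" "right_edge p = {a, c}" using pe_steps h by metis
          obtain a' c' where ac': "(a', c') \<in> steps (RV v)" "up_edge p = {a', c'}" using pe_steps h by metis
          have "{sc p, dA p} \<in> path_edges (RE u)" unfolding RE_def
            using ac(2) \<open>F u p\<close> by (intro E_rt[OF ac(1)]) (simp_all add: rt_eq)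
          moreover have "{sc p, dA p} \<in> path_edges (RE v)" unfolding RE_def
            by (rule E_up[OF ac'(1)]) (use ac'(2) in \<open>simp add: up_eq\<close>)
          ultimately show ?thesis by blast
        next
          assume h: "right_edge p \<in> path_edges (RV v) \<and> up_edge p \<in> path_edges (RV u)"
          have "F v p" unfolding F_def using u uv symE'[OF e] h by (intro bexI[of _ u]) auto
          obtain a c where ac: "(a, c) \<in> steps (RV v)" "right_edge p = {a, c}" using pe_steps h by metis
          obtain a' c' where ac': "(a', c') \<in> steps (RV u)" "up_edge p = {a', c'}" using pe_steps h by metis
          have "{sc p, dA p} \<in> path_edges (RE v)" unfolding RE_def
            using ac(2) \<open>F v p\<close> by (intro E_rt[OF ac(1)]) (simp_all add: rt_eq)
          moreover have "{sc p, dA p} \<in> path_edges (RE u)" unfolding RE_def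
            by (rule E_up[OF ac'(1)]) (use ac'(2) in \<open>simp add: up_eq\<close>)
          ultimately show ?thesis by blast
        qed
      next
        assume "path_edges (RE u) \<inter> path_edges (RE v) \<noteq> {}"
        then obtain e where eu: "e \<in> path_edges (RE u)" and ev: "e \<in> path_edges (RE v)" by blast
        have su: "successively grid_adj (RV u)" using vp_succ[OF vp[OF uV]] .
        have sv: "successively grid_adj (RV v)" using vp_succ[OF vp[OF vV]] .
        note cu = classify[OF eu[unfolded RE_def] su]
        note cv = classify[OF ev[unfolded RE_def] sv]
        have rr: "\<And>P P'. {P, rtP P} \<in> path_edges (RV u) \<Longrightarrow> {P', rtP P'} \<in> path_edges (RV v) \<Longrightarrow> P \<noteq> P'"
        proof
          fix P P' assume "{P, rtP P} \<in> path_edges (RV u)" "{P', rtP P'} \<in> path_edges (RV v)" "P = P'"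
          then show False using disj[OF uV vV, of "{P, rtP P}"] uv by simp
        qed
        have HH: "E' u v" if
          hu: "{x, y} \<in> path_edges (RV u) \<or> (\<exists>P. {x, y} = {P, upP P} \<and> F u P \<and> {P, rtP P} \<in> path_edges (RV u))"
          and hv: "{x, y} \<in> path_edges (RV v) \<or> (\<exists>P. {x, y} = {P, upP P} \<and> F v P \<and> {P, rtP P} \<in> path_edges (RV v))"
          for x y
        proof -
          from hu show ?thesis
          proof
            assume pu: "{x, y} \<in> path_edges (RV u)"
            from hv show ?thesis
            proof
              assume "{x, y} \<in> path_edges (RV v)" then show ?thesis using disj[OF uV vV pu] uv by blast
            next
              assume "\<exists>P. {x, y} = {P, upP P} \<and> F v P \<and> {P, rtP P} \<in> path_edges (RV v)"
              then obtain P where P: "{x, y} = {P, upP P}" "F v P" by blast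
              then obtain z where z: "z \<in> V'" "z \<noteq> v" "E' v z" "up_edge P \<in> path_edges (RV z)"
                unfolding F_def by blast
              have "up_edge P \<in> path_edges (RV u)" using pu P(1) by (simp add: up_eq)
              then have "z = u" using disj[OF _ uV] z VV by blast
              then show ?thesis using z(3) symE' by blast
            qed
          next
            assume "\<exists>P. {x, y} = {P, upP P} \<and> F u P \<and> {P, rtP P} \<in> path_edges (RV u)"
            then obtain P where P: "{x, y} = {P, upP P}" "F u P" "{P, rtP P} \<in> path_edges (RV u)" by blast
            from hv show ?thesis
            proof
              assume pv: "{x, y} \<in> path_edges (RV v)"
              obtain z where z: "z \<in> V'" "z \<noteq> u" "E' u z" "up_edge P \<in> path_edges (RV z)"
                using P(2) unfolding F_def by blast
              have "up_edge P \<in> path_edges (RV v)" using pv P(1) by (simp add: up_eq)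
              then have "z = v" using disj[OF _ vV] z VV by blast
              then show ?thesis using z(3) by blast
            next
              assume "\<exists>P. {x, y} = {P, upP P} \<and> F v P \<and> {P, rtP P} \<in> path_edges (RV v)"
              then obtain P' where P': "{x, y} = {P', upP P'}" "{P', rtP P'} \<in> path_edges (RV v)" by blast
              have "P = P'" using P(1) P'(1) by (intro P7) simp
              then show ?thesis using rr P(3) P'(2) by blast
            qed
          qed
        qed
        from cu show "E' u v"
        proof
          assume "\<exists>x y. grid_adj x y \<and> e = {sc x, mid x y} \<and>
            ({x, y} \<in> path_edges (RV u) \<or> (\<exists>P. {x, y} = {P, upP P} \<and> F u P \<and> {P, rtP P} \<in> path_edges (RV u)))"
          then obtain x y where X: "grid_adj x y" "e = {sc x, mid x y}"
            "{x, y} \<in> path_edges (RV u) \<or> (\<exists>P. {x, y} = {P, upP P} \<and> F u P \<and> {P, rtP P} \<in> path_edges (RV u))"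
            by blast
          from cv show "E' u v"
          proof
            assume "\<exists>x y. grid_adj x y \<and> e = {sc x, mid x y} \<and>
              ({x, y} \<in> path_edges (RV v) \<or> (\<exists>P. {x, y} = {P, upP P} \<and> F v P \<and> {P, rtP P} \<in> path_edges (RV v)))"
            then obtain x' y' where Y: "grid_adj x' y'" "e = {sc x', mid x' y'}"
              "{x', y'} \<in> path_edges (RV v) \<or> (\<exists>P. {x', y'} = {P, upP P} \<and> F v P \<and> {P, rtP P} \<in> path_edges (RV v))"
              by blast
            have "{x, y} = {x', y'}" by (rule P1[OF X(1) Y(1), of x x']) (use X(2) Y(2) in simp)
            then show ?thesis using HH[OF X(3)] Y(3) by simp
          next
            assume "\<exists>P. F v P \<and> {P, rtP P} \<in> path_edges (RV v) \<and> (e = {dA P, dB P} \<or> e = {dB P, mid P (rtP P)})"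
            then obtain P' where "e = {dA P', dB P'} \<or> e = {dB P', mid P' (rtP P')}" by blast
            then have False
            proof
              assume "e = {dA P', dB P'}" then show False using X(2) P2[OF X(1), of x P'] by simp
            next
              assume "e = {dB P', mid P' (rtP P')}" then show False using X(2) P3[OF X(1), of x P'] by simp
            qed
            then show ?thesis ..
          qed
        next
          assume "\<exists>P. F u P \<and> {P, rtP P} \<in> path_edges (RV u) \<and> (e = {dA P, dB P} \<or> e = {dB P, mid P (rtP P)})"
          then obtain P where P: "{P, rtP P} \<in> path_edges (RV u)" "e = {dA P, dB P} \<or> e = {dB P, mid P (rtP P)}"
            by blast
          from cv show "E' u v"
          proof
            assume "\<exists>x y. grid_adj x y \<and> e = {sc x, mid x y} \<and>
              ({x, y} \<in> path_edges (RV v) \<or> (\<exists>P. {x, y} = {P, upP P} \<and> F v P \<and> {P, rtP P} \<in> path_edges (RV v)))"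
            then obtain x y where "grid_adj x y" "e = {sc x, mid x y}" by blast
            then have False using P(2)
            proof (elim disjE)
              assume "grid_adj x y" "e = {sc x, mid x y}" "e = {dA P, dB P}"
              then show False using P2[of x y x P] by simp
            next
              assume "grid_adj x y" "e = {sc x, mid x y}" "e = {dB P, mid P (rtP P)}"
              then show False using P3[of x y x P] by simp
            qed
            then show ?thesis ..
          next
            assume "\<exists>P. F v P \<and> {P, rtP P} \<in> path_edges (RV v) \<and> (e = {dA P, dB P} \<or> e = {dB P, mid P (rtP P)})"
            then obtain P' where P': "{P', rtP P'} \<in> path_edges (RV v)" "e = {dA P', dB P'} \<or> e = {dB P', mid P' (rtP P')}"
              by blast
            have "P = P'" using P(2) P'(2)
            proof (elim disjE)
              assume "e = {dA P, dB P}" "e = {dA P', dB P'}" then show ?thesis using P5[of P P'] by simp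
            next
              assume "e = {dA P, dB P}" "e = {dB P', mid P' (rtP P')}" then show ?thesis using P4[of P P'] by simp
            next
              assume "e = {dB P, mid P (rtP P)}" "e = {dA P', dB P'}" then show ?thesis using P4[of P' P] by simp
            next
              assume "e = {dB P, mid P (rtP P)}" "e = {dB P', mid P' (rtP P')}" then show ?thesis using P6[of P P'] by simp
            qed
            then show ?thesis using rr P(1) P'(1) by blast
          qed
        qed
      qed
    qed
  qed
qed


end
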